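(* Let $A$ be a circular $m\times n$ matrix with no dominating rows, and let $\Gamma$ be a circuit of $F(A)$ with winding number $p$ and $s$ essential bullets $1\le b_1<b_2<\dots<b_s\le n$. Then $\Gamma$ has exactly $s$ row arcs, and each row arc of $\Gamma$ jumps over exactly $p$ essential bullets of $\Gamma$, i.e., it has the form $(B_i^-,B_{i+p}^+)$ for some $i\in[s]$ (block indices modulo $s$). Moreover, $\gcd(s,p)=1$.
   Context: Notation: $[n]=\{1,\dots,n\}$ with addition mod $n$ (index $0$ identified with $n$); for $a,c\in[n]$ with $t\ge0$ minimal such that $a+t\equiv c\pmod n$, $[a,c]_n=\{a,\dots,a+t\}$ (mod $n$), $[a,c)_n=[a,c]_n\setminus\{c\}$. An $m\times n$ $\{0,1\}$-matrix $A=(a_{ij})$ is circular if for each row $i$ there are $\ell_i\in[n]$ and an integer $2\le k_i\le n-1$ with row $i$ the incidence vector of $[\ell_i,\ell_i+k_i)_n$. Row $i$ dominates row $\ell\ne i$ if $a_{ij}\ge a_{\ell j}$ for all $j$. $F(A)$: digraph on $[n]$ (labels mod $n$) with row arcs $a_i=(\ell_i-1,\ell_i+k_i-1)$ ($i\in[m]$, length $k_i$), forward short arcs $(j-1,j)$ (length $1$), reverse short arcs $(j,j-1)$ (length $-1$). A circuit is a simple directed circuit; winding number $p(\Gamma)$: $p(\Gamma)n=$ sum of its arc lengths. A row arc $a_i$ jumps over $j$ iff $j\in[\ell_i,\ell_i+k_i)_n$. For a circuit $\Gamma$: $\circ(\Gamma)=\{j:(j-1,j)\in E(\Gamma)\}$,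 $\otimes(\Gamma)=\{j:(j,j-1)\in E(\Gamma)\}$, $\bullet(\Gamma)=[n]\setminus(\circ(\Gamma)\cup\otimes(\Gamma))$; essential bullets are bullets that are nodes of $\Gamma$. Blocks: with essential bullets $b_1<\dots<b_s$ (indices mod $s$), for $j\in[s]$ define $v_j\in[b_j,b_{j+1})_n$: if $b_j+1\in\circ(\Gamma)$, $v_j$ is such that $[b_j+1,v_j]_n\subseteq\circ(\Gamma)$ and $v_j+1\notin\circ(\Gamma)$; if $b_j+1\in\otimes(\Gamma)$, $[b_j+1,v_j]_n\subseteq\otimes(\Gamma)$ and $v_j+1\notin\otimes(\Gamma)$; if $b_j+1\in\bullet(\Gamma)$, $v_j=b_j$. $B_j=[b_j,v_j]_n$ is a circle/cross/bullet block according as $b_j+1$ is a circle/cross/bullet. Set $B_j^-=b_j$, $B_j^+=v_j$ for a cross block; $B_j^-=v_j$, $B_j^+=b_j$ for a circle block; $B_j^-=B_j^+=b_j$ for a bullet block. *)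

theory Defs
  imports Main
begin

(* Columns/vertices are the integers 1..n; arithmetic on labels is modulo n,
   with residue 0 identified with n.  md n x is the representative of x in {1..n}. *)
definition md :: "nat \<Rightarrow> int \<Rightarrow> int" where
  "md n x = (x - 1) mod int n + 1"

(* [a,c]_n and [a,c)_n : t \<ge> 0 minimal with a + t = c (mod n) is (c - a) mod n *)
definition cint_cc :: "nat \<Rightarrow> int \<Rightarrow> int \<Rightarrow> int set" where
  "cint_cc n a c = {md n (a + t) | t. 0 \<le> t \<and> t \<le> (c - a) mod int n}"

definition cint_co :: "nat \<Rightarrow> int \<Rightarrow> int \<Rightarrow> int set" where
  "cint_co n a c = cint_cc n a c - {md n c}"

(* A (an m x n {0,1}-matrix, rows 1..m, columns 1..n) is circular, with
   witnesses l i, k i : row i is the incidence vector of [l i, l i + k i)_n *)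
definition circular_wit ::
  "nat \<Rightarrow> nat \<Rightarrow> (nat \<Rightarrow> int \<Rightarrow> nat) \<Rightarrow> (nat \<Rightarrow> int) \<Rightarrow> (nat \<Rightarrow> int) \<Rightarrow> bool" where
  "circular_wit m n A l k \<longleftrightarrow>
     (\<forall>i\<in>{1..m}. l i \<in> {1..int n} \<and> 2 \<le> k i \<and> k i \<le> int n - 1 \<and>
        (\<forall>j\<in>{1..int n}. A i j = (if j \<in> cint_co n (l i) (l i + k i) then 1 else 0)))"

definition circular :: "nat \<Rightarrow> nat \<Rightarrow> (nat \<Rightarrow> int \<Rightarrow> nat) \<Rightarrow> bool" where
  "circular m n A \<longleftrightarrow> (\<exists>l k. circular_wit m n A l k)"

definition dominates :: "nat \<Rightarrow> (nat \<Rightarrow> int \<Rightarrow> nat) \<Rightarrow> nat \<Rightarrow> nat \<Rightarrow> bool" where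
  "dominates n A i l \<longleftrightarrow> (\<forall>j\<in>{1..int n}. A i j \<ge> A l j)"

definition no_dominating_rows :: "nat \<Rightarrow> nat \<Rightarrow> (nat \<Rightarrow> int \<Rightarrow> nat) \<Rightarrow> bool" where
  "no_dominating_rows m n A \<longleftrightarrow>
     (\<forall>i\<in>{1..m}. \<forall>l\<in>{1..m}. i \<noteq> l \<longrightarrow> \<not> dominates n A i l)"

(* Arcs of the multi-digraph F(A): row arcs a_i, forward short arcs (j-1,j),
   reverse short arcs (j,j-1). *)
datatype arc = RowArc nat | FwdArc int | RevArc int

definition arcs_F :: "nat \<Rightarrow> nat \<Rightarrow> arc set" where
  "arcs_F m n = RowArc ` {1..m} \<union> FwdArc ` {1..int n} \<union> RevArc ` {1..int n}"

fun tailF :: "nat \<Rightarrow> (nat \<Rightarrow> int) \<Rightarrow> (nat \<Rightarrow> int) \<Rightarrow> arc \<Rightarrow> int" where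
  "tailF n l k (RowArc i) = md n (l i - 1)"
| "tailF n l k (FwdArc j) = md n (j - 1)"
| "tailF n l k (RevArc j) = md n j"

fun headF :: "nat \<Rightarrow> (nat \<Rightarrow> int) \<Rightarrow> (nat \<Rightarrow> int) \<Rightarrow> arc \<Rightarrow> int" where
  "headF n l k (RowArc i) = md n (l i + k i - 1)"
| "headF n l k (FwdArc j) = md n j"
| "headF n l k (RevArc j) = md n (j - 1)"

fun lenF :: "(nat \<Rightarrow> int) \<Rightarrow> arc \<Rightarrow> int" where
  "lenF k (RowArc i) = k i"
| "lenF k (FwdArc j) = 1"
| "lenF k (RevArc j) = -1"

definition is_circuit ::
  "nat \<Rightarrow> nat \<Rightarrow> (nat \<Rightarrow> int) \<Rightarrow> (nat \<Rightarrow> int) \<Rightarrow> arc list \<Rightarrow> bool" where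
  "is_circuit m n l k es \<longleftrightarrow>
     es \<noteq> [] \<and> set es \<subseteq> arcs_F m n \<and>
     (\<forall>t < length es. headF n l k (es ! t) = tailF n l k (es ! ((t + 1) mod length es))) \<and>
     distinct (map (tailF n l k) es)"

definition nodes :: "nat \<Rightarrow> (nat \<Rightarrow> int) \<Rightarrow> (nat \<Rightarrow> int) \<Rightarrow> arc list \<Rightarrow> int set" where
  "nodes n l k es = set (map (tailF n l k) es)"

definition circs :: "arc list \<Rightarrow> int set" where
  "circs es = {j. FwdArc j \<in> set es}"

definition crosses :: "arc list \<Rightarrow> int set" where
  "crosses es = {j. RevArc j \<in> set es}"

definition bullets :: "nat \<Rightarrow> arc list \<Rightarrow> int set" where
  "bullets n es = {1..int n} - (circs es \<union> crosses es)"

definition ess_bullets :: "nat \<Rightarrow> (nat \<Rightarrow> int) \<Rightarrow> (nat \<Rightarrow> int) \<Rightarrow> arc list \<Rightarrow> int set" where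
  "ess_bullets n l k es = bullets n es \<inter> nodes n l k es"

(* b_j, j \<in> [s] with indices taken modulo s: the essential bullets in increasing order *)
definition bul :: "nat \<Rightarrow> (nat \<Rightarrow> int) \<Rightarrow> (nat \<Rightarrow> int) \<Rightarrow> arc list \<Rightarrow> int \<Rightarrow> int" where
  "bul n l k es j =
     (let S = ess_bullets n l k es
      in sorted_list_of_set S ! nat (md (card S) j - 1))"

(* the end v_j of block B_j starting at b = b_j *)
definition blockend :: "nat \<Rightarrow> arc list \<Rightarrow> int \<Rightarrow> int" where
  "blockend n es b =
     (if md n (b + 1) \<in> circs es then
        (THE v. v \<in> {1..int n} \<and> cint_cc n (b + 1) v \<subseteq> circs es \<and> md n (v + 1) \<notin> circs es)
      else if md n (b + 1) \<in> crosses es then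
        (THE v. v \<in> {1..int n} \<and> cint_cc n (b + 1) v \<subseteq> crosses es \<and> md n (v + 1) \<notin> crosses es)
      else b)"

definition Bminus :: "nat \<Rightarrow> (nat \<Rightarrow> int) \<Rightarrow> (nat \<Rightarrow> int) \<Rightarrow> arc list \<Rightarrow> int \<Rightarrow> int" where
  "Bminus n l k es j =
     (let b = bul n l k es j in
      if md n (b + 1) \<in> circs es then blockend n es b else b)"

definition Bplus :: "nat \<Rightarrow> (nat \<Rightarrow> int) \<Rightarrow> (nat \<Rightarrow> int) \<Rightarrow> arc list \<Rightarrow> int \<Rightarrow> int" where
  "Bplus n l k es j =
     (let b = bul n l k es j in
      if md n (b + 1) \<in> crosses es then blockend n es b else b)"

definition jumps_over :: "nat \<Rightarrow> (nat \<Rightarrow> int) \<Rightarrow> (nat \<Rightarrow> int) \<Rightarrow> nat \<Rightarrow> int \<Rightarrow> bool" where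
  "jumps_over n l k i j \<longleftrightarrow> j \<in> cint_co n (l i) (l i + k i)"

end

theory Submission
  imports Defs
begin

lemma md_ge1: "n > 0 \<Longrightarrow> 1 \<le> md n x"
  unfolding md_def by auto
lemma md_le: "n > 0 \<Longrightarrow> md n x \<le> int n"
  unfolding md_def using pos_mod_bound[of "int n" "x - 1"] by linarith
lemma md_range: "n > 0 \<Longrightarrow> md n x \<in> {1..int n}"
  using md_ge1 md_le by auto

lemma md_id: "x \<in> {1..int n} \<Longrightarrow> md n x = x"
  unfolding md_def by auto

lemma md_eq_iff: "md n a = md n b \<longleftrightarrow> a mod int n = b mod int n"
proof
  assume "md n a = md n b"
  then have h: "(a - 1) mod int n = (b - 1) mod int n" unfolding md_def by simp
  show "a mod int n = b mod int n" using mod_add_cong[OF h, of 1 1] by simp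
next
  assume "a mod int n = b mod int n"
  then have "(a - 1) mod int n = (b - 1) mod int n" by (rule mod_diff_cong) simp
  then show "md n a = md n b" unfolding md_def by simp
qed

lemma md_dvd: "int n dvd (x - md n x)"
proof -
  have "x - md n x = (x - 1) - (x - 1) mod int n" unfolding md_def by simp
  also have "\<dots> = int n * ((x - 1) div int n)" by (simp add: minus_mod_eq_mult_div)
  finally show ?thesis by simp
qed

lemma md_add_mult: "md n (x + c * int n) = md n x"
proof -
  have "x + c * int n - 1 = (x - 1) + c * int n" by simp
  then show ?thesis unfolding md_def by (metis mod_mult_self1)
qed

lemma md_add_n: "md n (x + int n) = md n x"
  using md_add_mult[of n x 1] by simp

lemma md_md_add: "md n (md n a + b) = md n (a + b)"
  unfolding md_def by (simp add: algebra_simps mod_simps)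

lemma md_md: "md n (md n a) = md n a"
  using md_md_add[of n a 0] by simp

lemma md_lift: "\<exists>c. x = md n x + c * int n"
proof -
  obtain c where "x - md n x = int n * c" using md_dvd[of n x] by (auto simp: dvd_def)
  then show ?thesis by (intro exI[of _ c]) (simp add: algebra_simps)
qed

lemma md_inj_int: "n > 0 \<Longrightarrow> md n a = md n b \<Longrightarrow> a \<le> b \<Longrightarrow> b < a + int n \<Longrightarrow> a = b"
proof -
  assume h: "n > 0" "md n a = md n b" "a \<le> b" "b < a + int n"
  have "a mod int n = b mod int n" using h(2) unfolding md_eq_iff .
  then have "int n dvd b - a" by (metis mod_eq_dvd_iff)
  then have "(b - a) mod int n = 0" by simp
  moreover have "(b - a) mod int n = b - a" using h by (intro mod_pos_pos_trivial) auto
  ultimately show ?thesis by simp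
qed


lemma strict_sorted_card_less:
  fixes xs :: "int list"
  assumes "sorted_wrt (<) xs" "i < length xs"
  shows "card {x \<in> set xs. x < xs ! i} = i"
proof -
  have d: "distinct xs" using assms(1) by (simp add: strict_sorted_iff)
  have "set (take i xs) = {x \<in> set xs. x < xs ! i}"
  proof
    show "set (take i xs) \<subseteq> {x \<in> set xs. x < xs ! i}"
    proof
      fix x assume "x \<in> set (take i xs)"
      then obtain j where j: "j < length (take i xs)" "x = take i xs ! j" by (metis in_set_conv_nth)
      then have "j < i" "x = xs ! j" by auto
      then show "x \<in> {x \<in> set xs. x < xs ! i}" using assms sorted_wrt_nth_less[OF assms(1)]
        by (auto intro: nth_mem)
    qed
  next
    show "{x \<in> set xs. x < xs ! i} \<subseteq> set (take i xs)"
    proof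
      fix x assume "x \<in> {x \<in> set xs. x < xs ! i}"
      then obtain j where j: "j < length xs" "x = xs ! j" "xs ! j < xs ! i" by (auto simp: in_set_conv_nth)
      have "j < i"
      proof (rule ccontr)
        assume "\<not> j < i"
        then have "i = j \<or> i < j" by auto
        then show False using sorted_wrt_nth_less[OF assms(1), of i j] j by auto
      qed
      then show "x \<in> set (take i xs)" using j by (auto simp: in_set_conv_nth intro!: exI[of _ j])
    qed
  qed
  then have "card {x \<in> set xs. x < xs ! i} = card (set (take i xs))" by simp
  also have "\<dots> = i" using d assms(2) by (simp add: distinct_card)
  finally show ?thesis .
qed

lemma sorted_list_nth_rank:
  fixes E :: "int set"
  assumes "finite E" "e \<in> E"
  shows "sorted_list_of_set E ! card {x \<in> E. x < e} = e"
proof -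
  let ?xs = "sorted_list_of_set E"
  have s: "sorted_wrt (<) ?xs" using assms by simp
  have se: "set ?xs = E" using assms by simp
  obtain i where i: "i < length ?xs" "?xs ! i = e" using assms se by (metis in_set_conv_nth)
  have "card {x \<in> E. x < e} = i" using strict_sorted_card_less[OF s i(1)] se i(2) by simp
  then show ?thesis using i by simp
qed

definition NN :: "nat \<Rightarrow> int set \<Rightarrow> int \<Rightarrow> int" where
  "NN n E x = int (card E) * ((x - md n x) div int n) + int (card {e \<in> E. e \<le> md n x})"

lemma md_succ: "n > 0 \<Longrightarrow> md n (x + 1) = (if md n x < int n then md n x + 1 else 1)"
proof -
  assume n: "n > 0"
  have "md n (x+1) = md n (md n x + 1)" by (simp add: md_md_add)
  also have "\<dots> = (if md n x < int n then md n x + 1 else 1)"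
  proof (cases "md n x < int n")
    case True
    then show ?thesis using md_ge1[OF n, of x] by (subst md_id) auto
  next
    case False
    then have "md n x = int n" using md_le[OF n, of x] by auto
    then show ?thesis using n by (simp add: md_def)
  qed
  finally show ?thesis .
qed

lemma NN_step:
  assumes n: "n > 0" and E: "E \<subseteq> {1..int n}"
  shows "NN n E (x + 1) = NN n E x + (if md n (x+1) \<in> E then 1 else 0)"
proof (cases "md n x < int n")
  case True
  then have m: "md n (x+1) = md n x + 1" using md_succ[OF n] by simp
  have "{e \<in> E. e \<le> md n x + 1} = {e \<in> E. e \<le> md n x} \<union> (if md n x + 1 \<in> E then {md n x + 1} else {})"
    by (cases "md n x + 1 \<in> E") (auto simp: le_less zle_add1_eq_le)
  moreover have "finite E" using E finite_subset by blast
  ultimately have "card {e \<in> E. e \<le> md n x + 1} = card {e \<in> E. e \<le> md n x} + (if md n x + 1 \<in> E then 1 else 0)"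
    by (auto simp: card_insert_if)
  then show ?thesis unfolding NN_def m by (simp add: algebra_simps)
next
  case False
  then have mx: "md n x = int n" using md_le[OF n, of x] by auto
  then have m: "md n (x+1) = 1" using md_succ[OF n, of x] by simp
  have fE: "finite E" using E finite_subset by blast
  have c1: "{e \<in> E. e \<le> int n} = E" using E by auto
  have c2: "{e \<in> E. e \<le> 1} = (if 1 \<in> E then {1} else {})" using E by auto
  have "(x + 1 - 1) div int n = (x - int n) div int n + 1"
    using n div_add_self2[of "int n" "x - int n"] by simp
  then show ?thesis unfolding NN_def m mx c1 c2 by (simp add: algebra_simps)
qed

lemma NN_add_mult:
  assumes n: "n > 0"
  shows "NN n E (x + c * int n) = NN n E x + c * int (card E)"
proof -
  have "(x + c * int n - md n x) div int n = (x - md n x) div int n + c"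
    using n by (metis (no_types, lifting) add.commute add_diff_eq div_mult_self1 of_nat_0_less_iff
        less_irrefl)
  then show ?thesis unfolding NN_def md_add_mult by (simp add: algebra_simps)
qed

lemma NN_mono_nat:
  assumes n: "n > 0" and E: "E \<subseteq> {1..int n}"
  shows "NN n E x \<le> NN n E (x + int d)"
proof (induction d)
  case 0 then show ?case by simp
next
  case (Suc d)
  then show ?case using NN_step[OF n E, of "x + int d"] by (simp add: algebra_simps split: if_splits)
qed

lemma NN_mono:
  assumes n: "n > 0" and E: "E \<subseteq> {1..int n}" and "x \<le> y"
  shows "NN n E x \<le> NN n E y"
  using NN_mono_nat[OF n E, of x "nat (y - x)"] assms(3) by simp

lemma NN_count_nat:
  assumes n: "n > 0" and E: "E \<subseteq> {1..int n}" and "d \<le> n"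
  shows "int (card {e \<in> E. e \<in> md n ` {x+1..x+int d}}) = NN n E (x + int d) - NN n E x"
  using assms(3)
proof (induction d)
  case 0 then show ?case by simp
next
  case (Suc d)
  have fE: "finite E" using E finite_subset by blast
  have nin: "md n (x + int d + 1) \<notin> md n ` {x+1..x+int d}"
  proof
    assume "md n (x + int d + 1) \<in> md n ` {x+1..x+int d}"
    then obtain z where z: "z \<in> {x+1..x+int d}" "md n z = md n (x + int d + 1)" by auto
    then have "z = x + int d + 1" using md_inj_int[OF n z(2)] Suc.prems by auto
    then show False using z by auto
  qed
  have "{x+1..x+int (Suc d)} = insert (x + int d + 1) {x+1..x+int d}" by auto
  then have "{e \<in> E. e \<in> md n ` {x+1..x+int (Suc d)}} =
     {e \<in> E. e \<in> md n ` {x+1..x+int d}} \<union> (if md n (x + int d + 1) \<in> E then {md n (x + int d + 1)} else {})"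
    by auto
  then have "card {e \<in> E. e \<in> md n ` {x+1..x+int (Suc d)}} =
     card {e \<in> E. e \<in> md n ` {x+1..x+int d}} + (if md n (x + int d + 1) \<in> E then 1 else 0)"
    using nin fE by (auto simp: card_insert_if)
  then show ?case using Suc NN_step[OF n E, of "x + int d"] by (simp add: algebra_simps)
qed

lemma NN_bul:
  assumes n: "n > 0" and E: "E \<subseteq> {1..int n}" and x: "md n x \<in> E"
  shows "sorted_list_of_set E ! nat (md (card E) (NN n E x) - 1) = md n x"
proof -
  have fE: "finite E" using E finite_subset by blast
  let ?c = "card {e \<in> E. e \<le> md n x}"
  have "{e \<in> E. e \<le> md n x} = insert (md n x) {e \<in> E. e < md n x}" using x by auto
  then have c: "?c = Suc (card {e \<in> E. e < md n x})" using fE by (simp add: card_insert_if)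
  have cle: "?c \<le> card E" using fE by (intro card_mono) auto
  obtain q where q: "x - md n x = q * int n" using md_dvd[of n x] by (auto simp: dvd_def mult.commute)
  have "NN n E x = int ?c + q * int (card E)"
    unfolding NN_def q using n by simp
  then have "md (card E) (NN n E x) = md (card E) (int ?c)" by (simp add: md_add_mult)
  also have "\<dots> = int ?c" using c cle by (intro md_id) auto
  finally show ?thesis using sorted_list_nth_rank[OF fE x] c by simp
qed


lemma NN_const:
  assumes n: "n > 0" and E: "E \<subseteq> {1..int n}" and h: "\<forall>t. 1 \<le> t \<and> t \<le> d \<longrightarrow> md n (z + int t) \<notin> E"
  shows "NN n E (z + int d) = NN n E z"
  using h
proof (induction d)
  case 0 then show ?case by simp
next
  case (Suc d)
  have "md n (z + int d + 1) \<notin> E" using Suc.prems[rule_format, of "Suc d"] by (simp add: ac_simps)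
  then have "NN n E (z + int d + 1) = NN n E z" using Suc NN_step[OF n E, of "z + int d"] by simp
  then show ?case by (simp add: ac_simps)
qed

lemma cint_cc_eq: "cint_cc n a c = md n ` {a .. a + (c - a) mod int n}"
  unfolding cint_cc_def
proof (intro set_eqI iffI)
  fix x assume "x \<in> {md n (a + t) |t. 0 \<le> t \<and> t \<le> (c - a) mod int n}"
  then obtain t where "x = md n (a + t)" "0 \<le> t" "t \<le> (c - a) mod int n" by auto
  then show "x \<in> md n ` {a .. a + (c - a) mod int n}" by (intro image_eqI[of _ _ "a + t"]) auto
next
  fix x assume "x \<in> md n ` {a .. a + (c - a) mod int n}"
  then obtain z where "x = md n z" "z \<in> {a .. a + (c - a) mod int n}" by auto
  then show "x \<in> {md n (a + t) |t. 0 \<le> t \<and> t \<le> (c - a) mod int n}"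
    by (intro CollectI exI[of _ "z - a"]) auto
qed

lemma md_image_shift: "md n ` {a + c * int n .. b + c * int n} = md n ` {a..b}"
proof (intro set_eqI iffI)
  fix x assume "x \<in> md n ` {a + c * int n .. b + c * int n}"
  then obtain z where "x = md n z" "z \<in> {a + c * int n .. b + c * int n}" by auto
  then show "x \<in> md n ` {a..b}" using md_add_mult[of n "z - c * int n" c]
    by (intro image_eqI[of _ _ "z - c * int n"]) auto
next
  fix x assume "x \<in> md n ` {a..b}"
  then obtain z where "x = md n z" "z \<in> {a..b}" by auto
  then show "x \<in> md n ` {a + c * int n .. b + c * int n}" using md_add_mult[of n z c]
    by (intro image_eqI[of _ _ "z + c * int n"]) auto
qed

lemma cint_co_eq:
  assumes n: "n > 0" and k: "1 \<le> k'" "k' < int n"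
  shows "cint_co n l (l + k') = md n ` {l .. l + k' - 1}"
proof -
  have "(l + k' - l) mod int n = k'" using k by simp
  then have cc: "cint_cc n l (l + k') = md n ` {l .. l + k'}" by (simp add: cint_cc_eq)
  have "{l .. l + k'} = insert (l + k') {l .. l + k' - 1}" using k by auto
  then have cc2: "cint_cc n l (l + k') = insert (md n (l + k')) (md n ` {l .. l + k' - 1})" using cc by simp
  have nin: "md n (l + k') \<notin> md n ` {l .. l + k' - 1}"
  proof
    assume "md n (l + k') \<in> md n ` {l .. l + k' - 1}"
    then obtain z where z: "z \<in> {l .. l + k' - 1}" "md n z = md n (l + k')" by auto
    then have "z = l + k'" using md_inj_int[OF n z(2)] k by auto
    then show False using z by auto
  qed
  show ?thesis unfolding cint_co_def cc2 using nin by auto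
qed

lemma blockend_the:
  assumes n: "n > 0" and d: "0 \<le> d" "d < int n"
    and inS: "\<forall>t. 0 \<le> t \<and> t \<le> d \<longrightarrow> md n (a + t) \<in> S" and out: "md n (a + d + 1) \<notin> S"
  shows "(THE w. w \<in> {1..int n} \<and> cint_cc n a w \<subseteq> S \<and> md n (w + 1) \<notin> S) = md n (a + d)"
proof (rule the_equality)
  let ?w = "md n (a + d)"
  have wm: "(?w - a) mod int n = d"
  proof -
    have "?w mod int n = (a + d) mod int n" using md_eq_iff[of n "?w" "a + d"] md_md by simp
    then have "(?w - a) mod int n = (a + d - a) mod int n" by (simp add: mod_diff_cong)
    then show ?thesis using d by simp
  qed
  have "md n ` {a .. a + d} \<subseteq> S"
  proof
    fix x assume "x \<in> md n ` {a .. a + d}"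
    then obtain z where "x = md n z" "z \<in> {a .. a + d}" by auto
    then show "x \<in> S" using inS[rule_format, of "z - a"] by auto
  qed
  then show "?w \<in> {1..int n} \<and> cint_cc n a ?w \<subseteq> S \<and> md n (?w + 1) \<notin> S"
    using md_range[OF n] out unfolding cint_cc_eq wm
    by (auto simp: md_md_add add.assoc)
next
  fix w assume w: "w \<in> {1..int n} \<and> cint_cc n a w \<subseteq> S \<and> md n (w + 1) \<notin> S"
  let ?d = "(w - a) mod int n"
  have d0: "0 \<le> ?d" "?d < int n" using n by auto
  have wa: "md n w = md n (a + ?d)"
    unfolding md_eq_iff by (simp add: mod_simps)
  have sub: "md n ` {a .. a + ?d} \<subseteq> S" using w unfolding cint_cc_eq by simp
  have "?d = d"
  proof (rule ccontr)
    assume "?d \<noteq> d"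
    then consider "?d < d" | "?d > d" by linarith
    then show False
    proof cases
      case 1
      have "md n (a + (?d + 1)) \<in> S" using inS 1 d0 by auto
      moreover have "md n (w + 1) = md n (a + (?d + 1))"
        using md_md_add[of n w 1] md_md_add[of n "a + ?d" 1] wa by (simp add: add.assoc)
      ultimately show False using w by simp
    next
      case 2
      have "md n (a + d + 1) \<in> md n ` {a .. a + ?d}" using 2 d by (intro imageI) auto
      then show False using sub out by auto
    qed
  qed
  then show "w = md n (a + d)" using wa w md_id[of w n] by simp
qed


lemma md_md_add2: "md n (b + md n a) = md n (b + a)"
  using md_md_add[of n a b] by (simp add: add.commute)
lemma md_md_diff: "md n (md n a - b) = md n (a - b)"
  using md_md_add[of n a "- b"] by simp

locale cset =
  fixes m n :: nat and A :: "nat \<Rightarrow> int \<Rightarrow> nat" and l k :: "nat \<Rightarrow> int" and es :: "arc list"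
  assumes circ: "circular_wit m n A l k" and nodom: "no_dominating_rows m n A"
    and circuit: "is_circuit m n l k es" and nondeg: "circs es \<inter> crosses es = {}"
begin

abbreviation "L \<equiv> length es"
abbreviation "T \<equiv> tailF n l k"
abbreviation "H \<equiv> headF n l k"
abbreviation "E \<equiv> ess_bullets n l k es"
abbreviation "Cc \<equiv> circs es"
abbreviation "Cr \<equiv> crosses es"

lemma L_pos: "L > 0" using circuit unfolding is_circuit_def by auto

lemma set_arcs: "set es \<subseteq> arcs_F m n" using circuit unfolding is_circuit_def by auto

lemma row_in: assumes "RowArc i \<in> set es"
  shows "i \<in> {1..m}" "l i \<in> {1..int n}" "2 \<le> k i" "k i \<le> int n - 1"
proof -
  have "RowArc i \<in> arcs_F m n" using assms set_arcs by auto
  then show "i \<in> {1..m}" unfolding arcs_F_def by auto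
  then show "l i \<in> {1..int n}" "2 \<le> k i" "k i \<le> int n - 1" using circ unfolding circular_wit_def by auto
qed

lemma fwd_in: "FwdArc j \<in> set es \<Longrightarrow> j \<in> {1..int n}"
  using set_arcs unfolding arcs_F_def by auto
lemma rev_in: "RevArc j \<in> set es \<Longrightarrow> j \<in> {1..int n}"
  using set_arcs unfolding arcs_F_def by auto

lemma n_pos: "n > 0"
proof -
  obtain e where e: "e \<in> set es" using L_pos by (metis length_greater_0_conv list.set_intros(1) neq_Nil_conv)
  show ?thesis
  proof (cases e)
    case (RowArc i) then show ?thesis using row_in[of i] e by auto
  next
    case (FwdArc j) then show ?thesis using fwd_in[of j] e by auto
  next
    case (RevArc j) then show ?thesis using rev_in[of j] e by auto
  qed
qed

lemma cyc: "t < L \<Longrightarrow> H (es ! t) = T (es ! ((t + 1) mod L))"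
  using circuit unfolding is_circuit_def by auto

lemma distT: "distinct (map T es)" using circuit unfolding is_circuit_def by auto

lemma dist: "distinct es" using distT by (simp add: distinct_map)

lemma T_inj: "e \<in> set es \<Longrightarrow> e' \<in> set es \<Longrightarrow> T e = T e' \<Longrightarrow> e = e'"
  using distT by (auto simp: distinct_map inj_on_def)

lemma mapH: "map H es = rotate 1 (map T es)"
proof (rule nth_equalityI)
  show "length (map H es) = length (rotate 1 (map T es))" by simp
next
  fix t assume "t < length (map H es)"
  then have t: "t < L" by simp
  have "rotate 1 (map T es) ! t = map T es ! ((t + 1) mod L)"
    using t by (simp add: nth_rotate1)
  also have "\<dots> = T (es ! ((t + 1) mod L))" using L_pos by simp
  finally show "map H es ! t = rotate 1 (map T es) ! t" using cyc[OF t] t by simp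
qed

lemma distH: "distinct (map H es)" using distT mapH by simp

lemma H_inj: "e \<in> set es \<Longrightarrow> e' \<in> set es \<Longrightarrow> H e = H e' \<Longrightarrow> e = e'"
  using distH by (auto simp: distinct_map inj_on_def)

lemma nodes_eq: "nodes n l k es = T ` set es" unfolding nodes_def by simp

lemma H_nodes: "H ` set es = nodes n l k es"
proof -
  have "set (map H es) = set (map T es)" using mapH by simp
  then show ?thesis unfolding nodes_def by simp
qed

lemma H_T_len: "H e = md n (T e + lenF k e)"
proof (cases e)
  case (RowArc i)
  have "md n (md n (l i - 1) + k i) = md n ((l i - 1) + k i)" by (rule md_md_add)
  then have "md n (md n (l i - 1) + k i) = md n (l i + k i - 1)" by (simp add: algebra_simps)
  then show ?thesis using RowArc by simp
next
  case (FwdArc j)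
  then show ?thesis by (simp add: md_md_add)
next
  case (RevArc j)
  then show ?thesis by (simp add: md_md_add md_md_diff)
qed

lemma E_sub: "E \<subseteq> {1..int n}" unfolding ess_bullets_def bullets_def by auto

lemma E_iff: "b \<in> E \<longleftrightarrow> b \<in> {1..int n} \<and> b \<notin> Cc \<and> b \<notin> Cr \<and> b \<in> nodes n l k es"
  unfolding ess_bullets_def bullets_def by auto

lemma Cc_iff: "j \<in> Cc \<longleftrightarrow> FwdArc j \<in> set es" unfolding circs_def by simp
lemma Cr_iff: "j \<in> Cr \<longleftrightarrow> RevArc j \<in> set es" unfolding crosses_def by simp

lemma T_fwd: "T (FwdArc j) = md n (j - 1)" by simp
lemma T_rev: "j \<in> {1..int n} \<Longrightarrow> T (RevArc j) = j" by (simp add: md_id)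
lemma H_fwd: "j \<in> {1..int n} \<Longrightarrow> H (FwdArc j) = j" by (simp add: md_id)
lemma H_rev: "H (RevArc j) = md n (j - 1)" by simp

lemma tail_lem0:
  assumes ri: "RowArc i \<in> set es" and xv: "md n x = T (RowArc i)"
  shows "Bminus n l k es (NN n E x) = md n x \<and> E \<noteq> {}"
proof -
  have n: "n > 0" by (rule n_pos)
  have F1: "md n (x+1) \<notin> Cc"
  proof
    assume "md n (x+1) \<in> Cc"
    then have fin: "FwdArc (md n (x+1)) \<in> set es" by (simp add: Cc_iff)
    have "T (FwdArc (md n (x+1))) = md n x" by (simp add: md_md_diff)
    then have "FwdArc (md n (x+1)) = RowArc i" using T_inj fin ri xv by metis
    then show False by simp
  qed
  have xn: "md n (x - int (n - 1)) = md n (x + 1)"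
  proof -
    have "x - int (n - 1) = (x + 1) + (-1) * int n" using n by simp
    then show ?thesis using md_add_mult[of n "x+1" "-1"] by presburger
  qed
  have ex: "\<exists>r::nat. md n (x - int r) \<notin> Cc"
    using F1 xn by (intro exI[of _ "n - 1"]) simp
  define r where "r = (LEAST r::nat. md n (x - int r) \<notin> Cc)"
  have rnot: "md n (x - int r) \<notin> Cc" using LeastI_ex[OF ex] unfolding r_def .
  have rle: "r \<le> n - 1"
  proof -
    have "md n (x - int (n - 1)) \<notin> Cc" using F1 xn by simp
    then show ?thesis unfolding r_def by (rule Least_le)
  qed
  have rin: "\<And>t. 0 \<le> t \<Longrightarrow> t < int r \<Longrightarrow> md n (x - t) \<in> Cc"
  proof -
    fix t :: int assume "0 \<le> t" "t < int r"
    then have "nat t < r" by simp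
    then have "\<not> md n (x - int (nat t)) \<notin> Cc" unfolding r_def by (rule not_less_Least)
    then show "md n (x - t) \<in> Cc" using \<open>0 \<le> t\<close> by simp
  qed
  define \<beta> where "\<beta> = md n (x - int r)"
  have bmd: "\<And>t. md n (\<beta> + t) = md n (x - int r + t)" unfolding \<beta>_def by (simp add: md_md_add)
  have F3: "\<beta> \<notin> Cr"
  proof
    assume "\<beta> \<in> Cr"
    then have rv: "RevArc \<beta> \<in> set es" by (simp add: Cr_iff)
    have Tr: "T (RevArc \<beta>) = \<beta>" unfolding \<beta>_def by (simp add: md_md)
    show False
    proof (cases "r = 0")
      case True
      then have "T (RevArc \<beta>) = T (RowArc i)" using Tr xv unfolding \<beta>_def by simp
      then have "RevArc \<beta> = RowArc i" using T_inj rv ri by metis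
      then show False by simp
    next
      case False
      let ?f = "md n (x - int (r - 1))"
      have "?f \<in> Cc" using rin[of "int (r - 1)"] False by simp
      then have ff: "FwdArc ?f \<in> set es" by (simp add: Cc_iff)
      have "T (FwdArc ?f) = md n (x - int (r - 1) - 1)" by (simp add: md_md_diff)
      also have "\<dots> = \<beta>" unfolding \<beta>_def using False by (simp add: algebra_simps of_nat_diff)
      finally have "FwdArc ?f = RevArc \<beta>" using T_inj ff rv Tr by metis
      then show False by simp
    qed
  qed
  have F4: "\<beta> \<in> nodes n l k es"
  proof (cases "r = 0")
    case True
    then have "\<beta> = T (RowArc i)" using xv unfolding \<beta>_def by simp
    then show ?thesis using ri unfolding nodes_eq by (metis imageI)
  next
    case False
    let ?f = "md n (x - int (r - 1))"
    have "?f \<in> Cc" using rin[of "int (r - 1)"] False by simp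
    then have ff: "FwdArc ?f \<in> set es" by (simp add: Cc_iff)
    have "T (FwdArc ?f) = md n (x - int (r - 1) - 1)" by (simp add: md_md_diff)
    also have "\<dots> = \<beta>" unfolding \<beta>_def using False by (simp add: algebra_simps of_nat_diff)
    finally show ?thesis using ff unfolding nodes_eq by (metis imageI)
  qed
  have bE: "\<beta> \<in> E" unfolding E_iff using F3 F4 rnot md_range[OF n] unfolding \<beta>_def by auto
  have NNeq: "NN n E x = NN n E (x - int r)"
  proof -
    have "\<forall>t. 1 \<le> t \<and> t \<le> r \<longrightarrow> md n (x - int r + int t) \<notin> E"
    proof (intro allI impI)
      fix t assume t: "1 \<le> t \<and> t \<le> r"
      have "md n (x - (int r - int t)) \<in> Cc" using rin[of "int r - int t"] t by simp
      then show "md n (x - int r + int t) \<notin> E" unfolding E_iff by (simp add: algebra_simps)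
    qed
    from NN_const[OF n E_sub this] show ?thesis by simp
  qed
  have bul: "bul n l k es (NN n E x) = \<beta>"
    unfolding bul_def Let_def NNeq using NN_bul[OF n E_sub, of "x - int r"] bE unfolding \<beta>_def by simp
  have main: "Bminus n l k es (NN n E x) = md n x"
  proof (cases "r = 0")
    case True
    have "md n (\<beta> + 1) = md n (x + 1)" using bmd[of 1] True by simp
    then have "md n (\<beta> + 1) \<notin> Cc" using F1 by simp
    then show ?thesis unfolding Bminus_def Let_def bul using True unfolding \<beta>_def by simp
  next
    case False
    have c1: "md n (\<beta> + 1) \<in> Cc" using bmd[of 1] rin[of "int r - 1"] False by (simp add: algebra_simps)
    have "blockend n es \<beta> = (THE v. v \<in> {1..int n} \<and> cint_cc n (\<beta> + 1) v \<subseteq> Cc \<and> md n (v + 1) \<notin> Cc)"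
      unfolding blockend_def using c1 by simp
    also have "\<dots> = md n (\<beta> + 1 + (int r - 1))"
    proof (rule blockend_the[OF n])
      show "0 \<le> int r - 1" "int r - 1 < int n" using False rle n by auto
      show "\<forall>t. 0 \<le> t \<and> t \<le> int r - 1 \<longrightarrow> md n (\<beta> + 1 + t) \<in> Cc"
      proof (intro allI impI)
        fix t assume t: "0 \<le> t \<and> t \<le> int r - 1"
        have "md n (\<beta> + 1 + t) = md n (x - (int r - 1 - t))" using bmd[of "1 + t"] by (simp add: algebra_simps)
        then show "md n (\<beta> + 1 + t) \<in> Cc" using rin[of "int r - 1 - t"] t by simp
      qed
      show "md n (\<beta> + 1 + (int r - 1) + 1) \<notin> Cc" using bmd[of "int r + 1"] F1 by (simp add: algebra_simps)
    qed
    also have "\<dots> = md n x" using bmd[of "int r"] by simp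
    finally show ?thesis unfolding Bminus_def Let_def bul using c1 by simp
  qed
  show ?thesis using main bE by auto
qed

lemma tail_lem: "RowArc i \<in> set es \<Longrightarrow> md n x = T (RowArc i) \<Longrightarrow> Bminus n l k es (NN n E x) = md n x"
  using tail_lem0 by blast

lemma row_E: "RowArc i \<in> set es \<Longrightarrow> E \<noteq> {}"
  using tail_lem0[of i "l i - 1"] by simp

end

context cset begin

lemma head_lem:
  assumes ri: "RowArc i \<in> set es" and xv: "md n x = H (RowArc i)"
  shows "Bplus n l k es (NN n E x) = md n x"
proof -
  have n: "n > 0" by (rule n_pos)
  have F1: "md n (x+1) \<notin> Cr"
  proof
    assume "md n (x+1) \<in> Cr"
    then have fin: "RevArc (md n (x+1)) \<in> set es" by (simp add: Cr_iff)
    have "H (RevArc (md n (x+1))) = md n x" by (simp add: md_md_diff)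
    then have "RevArc (md n (x+1)) = RowArc i" using H_inj fin ri xv by metis
    then show False by simp
  qed
  have xn: "md n (x - int (n - 1)) = md n (x + 1)"
  proof -
    have "x - int (n - 1) = (x + 1) + (-1) * int n" using n by simp
    then show ?thesis using md_add_mult[of n "x+1" "-1"] by presburger
  qed
  have ex: "\<exists>r::nat. md n (x - int r) \<notin> Cr"
    using F1 xn by (intro exI[of _ "n - 1"]) simp
  define r where "r = (LEAST r::nat. md n (x - int r) \<notin> Cr)"
  have rnot: "md n (x - int r) \<notin> Cr" using LeastI_ex[OF ex] unfolding r_def .
  have rle: "r \<le> n - 1"
  proof -
    have "md n (x - int (n - 1)) \<notin> Cr" using F1 xn by simp
    then show ?thesis unfolding r_def by (rule Least_le)
  qed
  have rin: "\<And>t. 0 \<le> t \<Longrightarrow> t < int r \<Longrightarrow> md n (x - t) \<in> Cr"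
  proof -
    fix t :: int assume "0 \<le> t" "t < int r"
    then have "nat t < r" by simp
    then have "\<not> md n (x - int (nat t)) \<notin> Cr" unfolding r_def by (rule not_less_Least)
    then show "md n (x - t) \<in> Cr" using \<open>0 \<le> t\<close> by simp
  qed
  define \<beta> where "\<beta> = md n (x - int r)"
  have bmd: "\<And>t. md n (\<beta> + t) = md n (x - int r + t)" unfolding \<beta>_def by (simp add: md_md_add)
  have F3: "\<beta> \<notin> Cc"
  proof
    assume "\<beta> \<in> Cc"
    then have rv: "FwdArc \<beta> \<in> set es" by (simp add: Cc_iff)
    have Tr: "H (FwdArc \<beta>) = \<beta>" unfolding \<beta>_def by (simp add: md_md)
    show False
    proof (cases "r = 0")
      case True
      then have "H (FwdArc \<beta>) = H (RowArc i)" using Tr xv unfolding \<beta>_def by simp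
      then have "FwdArc \<beta> = RowArc i" using H_inj rv ri by metis
      then show False by simp
    next
      case False
      let ?f = "md n (x - int (r - 1))"
      have "?f \<in> Cr" using rin[of "int (r - 1)"] False by simp
      then have ff: "RevArc ?f \<in> set es" by (simp add: Cr_iff)
      have "H (RevArc ?f) = md n (x - int (r - 1) - 1)" by (simp add: md_md_diff)
      also have "\<dots> = \<beta>" unfolding \<beta>_def using False by (simp add: algebra_simps of_nat_diff)
      finally have "RevArc ?f = FwdArc \<beta>" using H_inj ff rv Tr by metis
      then show False by simp
    qed
  qed
  have F4: "\<beta> \<in> nodes n l k es"
  proof (cases "r = 0")
    case True
    then have "\<beta> = H (RowArc i)" using xv unfolding \<beta>_def by simp
    then show ?thesis using ri unfolding H_nodes[symmetric] by (metis imageI)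
  next
    case False
    let ?f = "md n (x - int (r - 1))"
    have "?f \<in> Cr" using rin[of "int (r - 1)"] False by simp
    then have ff: "RevArc ?f \<in> set es" by (simp add: Cr_iff)
    have "H (RevArc ?f) = md n (x - int (r - 1) - 1)" by (simp add: md_md_diff)
    also have "\<dots> = \<beta>" unfolding \<beta>_def using False by (simp add: algebra_simps of_nat_diff)
    finally show ?thesis using ff unfolding H_nodes[symmetric] by (metis imageI)
  qed
  have bE: "\<beta> \<in> E" unfolding E_iff using F3 F4 rnot md_range[OF n] unfolding \<beta>_def by auto
  have NNeq: "NN n E x = NN n E (x - int r)"
  proof -
    have "\<forall>t. 1 \<le> t \<and> t \<le> r \<longrightarrow> md n (x - int r + int t) \<notin> E"
    proof (intro allI impI)
      fix t assume t: "1 \<le> t \<and> t \<le> r"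
      have "md n (x - (int r - int t)) \<in> Cr" using rin[of "int r - int t"] t by simp
      then show "md n (x - int r + int t) \<notin> E" unfolding E_iff by (simp add: algebra_simps)
    qed
    from NN_const[OF n E_sub this] show ?thesis by simp
  qed
  have bul: "bul n l k es (NN n E x) = \<beta>"
    unfolding bul_def Let_def NNeq using NN_bul[OF n E_sub, of "x - int r"] bE unfolding \<beta>_def by simp
  show ?thesis
  proof (cases "r = 0")
    case True
    have "md n (\<beta> + 1) = md n (x + 1)" using bmd[of 1] True by simp
    then have "md n (\<beta> + 1) \<notin> Cr" using F1 by simp
    then show ?thesis unfolding Bplus_def Let_def bul using True unfolding \<beta>_def by simp
  next
    case False
    have c1: "md n (\<beta> + 1) \<in> Cr" using bmd[of 1] rin[of "int r - 1"] False by (simp add: algebra_simps)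
    then have c0: "md n (\<beta> + 1) \<notin> Cc" using nondeg by auto
    have "blockend n es \<beta> = (THE v. v \<in> {1..int n} \<and> cint_cc n (\<beta> + 1) v \<subseteq> Cr \<and> md n (v + 1) \<notin> Cr)"
      unfolding blockend_def using c1 c0 by simp
    also have "\<dots> = md n (\<beta> + 1 + (int r - 1))"
    proof (rule blockend_the[OF n])
      show "0 \<le> int r - 1" "int r - 1 < int n" using False rle n by auto
      show "\<forall>t. 0 \<le> t \<and> t \<le> int r - 1 \<longrightarrow> md n (\<beta> + 1 + t) \<in> Cr"
      proof (intro allI impI)
        fix t assume t: "0 \<le> t \<and> t \<le> int r - 1"
        have "md n (\<beta> + 1 + t) = md n (x - (int r - 1 - t))" using bmd[of "1 + t"] by (simp add: algebra_simps)
        then show "md n (\<beta> + 1 + t) \<in> Cr" using rin[of "int r - 1 - t"] t by simp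
      qed
      show "md n (\<beta> + 1 + (int r - 1) + 1) \<notin> Cr" using bmd[of "int r + 1"] F1 by (simp add: algebra_simps)
    qed
    also have "\<dots> = md n x" using bmd[of "int r"] by simp
    finally show ?thesis unfolding Bplus_def Let_def bul using c1 by simp
  qed
qed

end

lemma md_eq_lift: "n > 0 \<Longrightarrow> md n a = md n b \<Longrightarrow> \<exists>c. a = b + c * int n"
proof -
  assume "n > 0" "md n a = md n b"
  obtain c1 where c1: "a = md n a + c1 * int n" using md_lift by blast
  obtain c2 where c2: "b = md n b + c2 * int n" using md_lift by blast
  show ?thesis using c1 c2 \<open>md n a = md n b\<close> by (intro exI[of _ "c1 - c2"]) (simp add: algebra_simps)
qed

context cset begin

lemma B_periodic:
  assumes "md (card E) a = md (card E) b"
  shows "Bminus n l k es a = Bminus n l k es b" "Bplus n l k es a = Bplus n l k es b"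
    "bul n l k es a = bul n l k es b"
  using assms unfolding Bminus_def Bplus_def bul_def Let_def by simp_all

definition isRow :: "arc \<Rightarrow> bool" where "isRow e \<longleftrightarrow> (\<exists>i. e = RowArc i)"

lemma walk:
  assumes bE: "\<beta> \<in> E" and ex: "\<exists>t<L. isRow (es ! t)"
  shows "\<exists>i u. RowArc i \<in> set es \<and> T (RowArc i) = md n (\<beta> + int u)
                \<and> (\<forall>t. 1 \<le> t \<and> t \<le> u \<longrightarrow> md n (\<beta> + int t) \<in> Cc)"
proof -
  have n: "n > 0" by (rule n_pos)
  have Lp: "L > 0" by (rule L_pos)
  have "\<beta> \<in> nodes n l k es" using bE unfolding E_iff by simp
  then obtain t0 where t0: "t0 < L" "T (es ! t0) = \<beta>" unfolding nodes_eq by (metis imageE in_set_conv_nth)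
  have b1n: "\<beta> \<in> {1..int n}" using bE unfolding E_iff by simp
  define f where "f d = es ! ((t0 + d) mod L)" for d
  have fin: "f d \<in> set es" for d unfolding f_def using Lp by simp
  have fsuc: "H (f d) = T (f (Suc d))" for d
  proof -
    have "H (f d) = T (es ! (((t0 + d) mod L + 1) mod L))" unfolding f_def using cyc Lp by simp
    also have "((t0 + d) mod L + 1) mod L = (t0 + Suc d) mod L" by (simp add: mod_Suc_eq)
    finally show ?thesis unfolding f_def .
  qed
  obtain t1 where t1: "t1 < L" "isRow (es ! t1)" using ex by blast
  have exd: "\<exists>d. isRow (f d)"
  proof (intro exI)
    have "(t0 + (t1 + L - t0)) mod L = t1" using t0 t1 by simp
    then show "isRow (f (t1 + L - t0))" unfolding f_def using t1 by simp
  qed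
  define ds where "ds = (LEAST d. isRow (f d))"
  have dsrow: "isRow (f ds)" unfolding ds_def using LeastI_ex[OF exd] .
  have claim: "d \<le> ds \<Longrightarrow> T (f d) = md n (\<beta> + int d) \<and> (\<forall>t. 1 \<le> t \<and> t \<le> d \<longrightarrow> md n (\<beta> + int t) \<in> Cc)" for d
  proof (induction d)
    case 0
    have "f 0 = es ! t0" unfolding f_def using t0 by simp
    then show ?case using t0 b1n md_id[of \<beta> n] by simp
  next
    case (Suc d)
    then have dl: "d < ds" by simp
    have IH: "T (f d) = md n (\<beta> + int d)" "\<forall>t. 1 \<le> t \<and> t \<le> d \<longrightarrow> md n (\<beta> + int t) \<in> Cc"
      using Suc by auto
    have nr: "\<not> isRow (f d)" using dl unfolding ds_def by (rule not_less_Least)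
    show ?case
    proof (cases "f d")
      case (RowArc i) then show ?thesis using nr unfolding isRow_def by simp
    next
      case (RevArc j)
      have j: "j \<in> {1..int n}" using fin[of d] RevArc rev_in by simp
      have jT: "j = md n (\<beta> + int d)" using IH(1) RevArc T_rev[OF j] by simp
      have jCr: "j \<in> Cr" using fin[of d] RevArc Cr_iff by simp
      show ?thesis
      proof (cases "d = 0")
        case True
        then have "j = \<beta>" using jT b1n md_id[of \<beta> n] by simp
        then show ?thesis using jCr bE unfolding E_iff by simp
      next
        case False
        then have "md n (\<beta> + int d) \<in> Cc" using IH(2) by simp
        then show ?thesis using jT jCr nondeg by auto
      qed
    next
      case (FwdArc j)
      have j: "j \<in> {1..int n}" using fin[of d] FwdArc fwd_in by simp
      have jT: "md n (j - 1) = md n (\<beta> + int d)" using IH(1) FwdArc by simp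
      have "j = md n (md n (j - 1) + 1)" using md_id[OF j] by (simp add: md_md_add)
      also have "\<dots> = md n (\<beta> + int (Suc d))" using jT md_md_add[of n "\<beta> + int d" 1] by (simp add: ac_simps)
      finally have jeq: "j = md n (\<beta> + int (Suc d))" .
      have jCc: "j \<in> Cc" using fin[of d] FwdArc Cc_iff by simp
      have "T (f (Suc d)) = j" using fsuc[of d] FwdArc H_fwd[OF j] by simp
      then show ?thesis using IH(2) jeq jCc by (auto simp: le_Suc_eq)
    qed
  qed
  obtain i where i: "f ds = RowArc i" using dsrow unfolding isRow_def by blast
  show ?thesis using claim[of ds] i fin[of ds] by (intro exI[of _ i] exI[of _ ds]) simp
qed

definition G :: "nat \<Rightarrow> int" where "G i = md (card E) (NN n E (l i - 1))"

lemma G_inj: "inj_on G {i. RowArc i \<in> set es}"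
proof (rule inj_onI)
  fix i i' assume i: "i \<in> {i. RowArc i \<in> set es}" and i': "i' \<in> {i. RowArc i \<in> set es}" and g: "G i = G i'"
  have "Bminus n l k es (NN n E (l i - 1)) = Bminus n l k es (NN n E (l i' - 1))"
    using g unfolding G_def by (rule B_periodic)
  then have "md n (l i - 1) = md n (l i' - 1)" using tail_lem[of i "l i - 1"] tail_lem[of i' "l i' - 1"] i i' by simp
  then have "T (RowArc i) = T (RowArc i')" by simp
  then show "i = i'" using T_inj i i' by blast
qed

lemma sorted_idx_eq:
  assumes "finite S" "a < card S" "b < card S" "sorted_list_of_set S ! a = sorted_list_of_set S ! b"
  shows "a = b"
  using assms nth_eq_iff_index_eq[of "sorted_list_of_set S" a b] by simp

lemma G_surj:
  assumes ex: "\<exists>t<L. isRow (es ! t)" and g: "g \<in> {1..int (card E)}"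
  shows "\<exists>i. RowArc i \<in> set es \<and> G i = g"
proof -
  have n: "n > 0" by (rule n_pos)
  have fE: "finite E" using E_sub finite_subset by blast
  let ?xs = "sorted_list_of_set E"
  define \<beta> where "\<beta> = ?xs ! nat (g - 1)"
  have bE: "\<beta> \<in> E" unfolding \<beta>_def using g fE by (metis nth_mem set_sorted_list_of_set length_sorted_list_of_set
       atLeastAtMost_iff nat_less_iff zle_diff1_eq int_one_le_iff_zero_less diff_less_eq le_less_trans
       less_add_one)
  obtain i u where iu: "RowArc i \<in> set es" "T (RowArc i) = md n (\<beta> + int u)"
    "\<forall>t. 1 \<le> t \<and> t \<le> u \<longrightarrow> md n (\<beta> + int t) \<in> Cc" using walk[OF bE ex] by blast
  have "NN n E (\<beta> + int u) = NN n E \<beta>"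
    using NN_const[OF n E_sub, of u \<beta>] iu(3) unfolding E_iff by auto
  moreover obtain c where c: "l i - 1 = \<beta> + int u + c * int n"
    using md_eq_lift[OF n, of "l i - 1" "\<beta> + int u"] iu(2) by auto
  ultimately have NNi: "NN n E (l i - 1) = NN n E \<beta> + c * int (card E)" using NN_add_mult[OF n] by simp
  have Gi: "G i = md (card E) (NN n E \<beta>)" unfolding G_def NNi md_add_mult ..
  have b1n: "\<beta> \<in> {1..int n}" using bE E_sub by auto
  have s0: "card E > 0" using bE fE card_gt_0_iff by blast
  have "?xs ! nat (md (card E) (NN n E \<beta>) - 1) = \<beta>" using NN_bul[OF n E_sub, of \<beta>] bE md_id[OF b1n] by simp
  then have "?xs ! nat (md (card E) (NN n E \<beta>) - 1) = ?xs ! nat (g - 1)" unfolding \<beta>_def by simp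
  then have "nat (md (card E) (NN n E \<beta>) - 1) = nat (g - 1)"
    using sorted_idx_eq[OF fE] g md_range[OF s0, of "NN n E \<beta>"] by (smt (verit) atLeastAtMost_iff nat_less_iff)
  then have "md (card E) (NN n E \<beta>) = g" using g md_range[OF s0, of "NN n E \<beta>"]
      eq_nat_nat_iff[of "md (card E) (NN n E \<beta>) - 1" "g - 1"] by simp
  then show ?thesis using Gi iu(1) by blast
qed

lemma rows_card:
  assumes ex: "\<exists>t<L. isRow (es ! t)"
  shows "card {i. RowArc i \<in> set es} = card E"
proof -
  obtain t where t: "t < L" "isRow (es ! t)" using ex by blast
  then obtain i0 where i0: "RowArc i0 \<in> set es" unfolding isRow_def by (metis nth_mem)
  have s0: "card E > 0" using row_E[OF i0] E_sub finite_subset card_gt_0_iff by blast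
  have "bij_betw G {i. RowArc i \<in> set es} {1..int (card E)}"
  proof (rule bij_betw_imageI[OF G_inj])
    show "G ` {i. RowArc i \<in> set es} = {1..int (card E)}"
    proof
      show "G ` {i. RowArc i \<in> set es} \<subseteq> {1..int (card E)}" unfolding G_def using md_range[OF s0] by auto
      show "{1..int (card E)} \<subseteq> G ` {i. RowArc i \<in> set es}" using G_surj[OF ex] by blast
    qed
  qed
  then have "card {i. RowArc i \<in> set es} = card {1..int (card E)}" by (rule bij_betw_same_card)
  then show ?thesis by simp
qed

end

context cset begin

definition J :: "nat \<Rightarrow> int" where "J i = NN n E (l i + k i - 1) - NN n E (l i - 1)"

lemma J_lift:
  assumes "md n x = md n (l i - 1)"
  shows "NN n E (x + k i) = NN n E x + J i"
proof -
  have n: "n > 0" by (rule n_pos)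
  obtain c where c: "x = l i - 1 + c * int n" using md_eq_lift[OF n assms] by blast
  have "NN n E (x + k i) = NN n E (l i + k i - 1 + c * int n)" unfolding c by (simp add: algebra_simps)
  also have "\<dots> = NN n E (l i + k i - 1) + c * int (card E)" by (rule NN_add_mult[OF n])
  finally show ?thesis unfolding c J_def NN_add_mult[OF n] by simp
qed

lemma cols_lift:
  assumes ri: "RowArc i \<in> set es" and x: "md n x = md n (l i - 1)"
  shows "cint_co n (l i) (l i + k i) = md n ` {x + 1 .. x + k i}"
proof -
  have n: "n > 0" by (rule n_pos)
  obtain c where c: "x = l i - 1 + c * int n" using md_eq_lift[OF n x] by blast
  have "cint_co n (l i) (l i + k i) = md n ` {l i .. l i + k i - 1}"
    using row_in[OF ri] by (intro cint_co_eq[OF n]) auto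
  also have "\<dots> = md n ` {l i + c * int n .. l i + k i - 1 + c * int n}" by (rule md_image_shift[symmetric])
  also have "{l i + c * int n .. l i + k i - 1 + c * int n} = {x + 1 .. x + k i}" unfolding c by (simp add: algebra_simps)
  finally show ?thesis .
qed

lemma A_row:
  assumes ri: "RowArc i \<in> set es" and j: "j \<in> {1..int n}"
  shows "A i j = (if j \<in> cint_co n (l i) (l i + k i) then 1 else 0)"
  using circ row_in(1)[OF ri] j unfolding circular_wit_def by auto

lemma J_step:
  assumes ra: "RowArc a \<in> set es" and rb: "RowArc b \<in> set es"
    and xa: "md n Xa = md n (l a - 1)" and xb: "md n Xb = md n (l b - 1)"
    and nx: "NN n E Xb = NN n E Xa + 1"
  shows "J a \<le> J b"
proof (cases "a = b")
  case True then show ?thesis by simp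
next
  case False
  have n: "n > 0" by (rule n_pos)
  have lt: "Xa < Xb"
  proof (rule ccontr)
    assume "\<not> Xa < Xb"
    then have "NN n E Xb \<le> NN n E Xa" using NN_mono[OF n E_sub] by simp
    then show False using nx by simp
  qed
  have YaYb: "Xa + k a < Xb + k b"
  proof (rule ccontr)
    assume "\<not> Xa + k a < Xb + k b"
    then have sub: "{Xb + 1 .. Xb + k b} \<subseteq> {Xa + 1 .. Xa + k a}" using lt by auto
    have "dominates n A a b"
      unfolding dominates_def
    proof
      fix j assume j: "j \<in> {1..int n}"
      show "A b j \<le> A a j"
        using sub cols_lift[OF ra xa] cols_lift[OF rb xb] A_row[OF ra j] A_row[OF rb j] by auto
    qed
    then show False using nodom row_in(1)[OF ra] row_in(1)[OF rb] False unfolding no_dominating_rows_def by blast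
  qed
  have ya: "NN n E (Xa + k a) = NN n E Xa + J a" using J_lift[OF xa] .
  have yb: "NN n E (Xb + k b) = NN n E Xb + J b" using J_lift[OF xb] .
  have le: "NN n E (Xa + k a) \<le> NN n E (Xb + k b)" using NN_mono[OF n E_sub] YaYb by simp
  have ne: "NN n E (Xa + k a) \<noteq> NN n E (Xb + k b)"
  proof
    assume eq: "NN n E (Xa + k a) = NN n E (Xb + k b)"
    have ha: "md n (Xa + k a) = H (RowArc a)"
      using xa md_md_add[of n Xa "k a"] md_md_add[of n "l a - 1" "k a"] by (simp add: algebra_simps)
    have hb: "md n (Xb + k b) = H (RowArc b)"
      using xb md_md_add[of n Xb "k b"] md_md_add[of n "l b - 1" "k b"] by (simp add: algebra_simps)
    have "md n (Xa + k a) = md n (Xb + k b)"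
      using head_lem[OF ra ha] head_lem[OF rb hb] eq by simp
    then have "H (RowArc a) = H (RowArc b)" using ha hb by simp
    then show False using H_inj ra rb False by blast
  qed
  show ?thesis using ya yb le ne nx by simp
qed

lemma J_const:
  assumes ex: "\<exists>t<L. isRow (es ! t)"
  shows "\<exists>J0. \<forall>i. RowArc i \<in> set es \<longrightarrow> J i = J0"
proof -
  have n: "n > 0" by (rule n_pos)
  obtain t where t: "t < L" "isRow (es ! t)" using ex by blast
  then obtain i0 where i0: "RowArc i0 \<in> set es" unfolding isRow_def by (metis nth_mem)
  have s0: "card E > 0" using row_E[OF i0] E_sub finite_subset card_gt_0_iff by blast
  have "\<forall>g. \<exists>i. RowArc i \<in> set es \<and> G i = md (card E) g"
    using G_surj[OF ex] md_range[OF s0] by blast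
  then obtain \<rho> where \<rho>: "\<And>g. RowArc (\<rho> g) \<in> set es \<and> G (\<rho> g) = md (card E) g" by metis
  have \<rho>per: "\<rho> g = \<rho> g'" if "md (card E) g = md (card E) g'" for g g'
  proof -
    have "G (\<rho> g) = G (\<rho> g')" using \<rho>[of g] \<rho>[of g'] that by simp
    then show ?thesis using inj_onD[OF G_inj] \<rho>[of g] \<rho>[of g'] by blast
  qed
  have X: "\<exists>x. md n x = md n (l (\<rho> g) - 1) \<and> NN n E x = g" for g
  proof -
    have "md (card E) g = md (card E) (NN n E (l (\<rho> g) - 1))" using \<rho>[of g] unfolding G_def by simp
    then obtain c where c: "g = NN n E (l (\<rho> g) - 1) + c * int (card E)" using md_eq_lift[OF s0] by blast
    have "NN n E (l (\<rho> g) - 1 + c * int n) = g" using NN_add_mult[OF n] c by simp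
    then show ?thesis
      by (intro exI[of _ "l (\<rho> g) - 1 + c * int n"]) (simp add: md_add_mult)
  qed
  have step: "J (\<rho> g) \<le> J (\<rho> (g + 1))" for g
  proof -
    obtain xa where xa: "md n xa = md n (l (\<rho> g) - 1)" "NN n E xa = g" using X by blast
    obtain xb where xb: "md n xb = md n (l (\<rho> (g+1)) - 1)" "NN n E xb = g + 1" using X by blast
    show ?thesis by (rule J_step[OF conjunct1[OF \<rho>] conjunct1[OF \<rho>] xa(1) xb(1)]) (simp add: xa xb)
  qed
  have chain: "J (\<rho> g) \<le> J (\<rho> (g + int d))" for g d
  proof (induction d)
    case 0 then show ?case by simp
  next
    case (Suc d)
    have e: "g + int (Suc d) = (g + int d) + 1" by simp
    show ?case unfolding e using Suc step[of "g + int d"] by linarith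
  qed
  have per: "J (\<rho> (int (card E))) = J (\<rho> 0)"
    using \<rho>per[of "int (card E)" 0] by (simp add: md_def)
  show ?thesis
  proof (intro exI allI impI)
    fix i assume ri: "RowArc i \<in> set es"
    have Gr: "G i \<in> {1..int (card E)}" unfolding G_def using md_range[OF s0] by simp
    have "G (\<rho> (G i)) = G i" using \<rho>[of "G i"] md_id[OF Gr] by simp
    then have ri': "\<rho> (G i) = i" using inj_onD[OF G_inj] \<rho>[of "G i"] ri by blast
    have "J (\<rho> 0) \<le> J (\<rho> (G i))" using chain[of 0 "nat (G i)"] Gr by simp
    moreover have "J (\<rho> (G i)) \<le> J (\<rho> (int (card E)))" using chain[of "G i" "nat (int (card E) - G i)"] Gr by simp
    ultimately show "J i = J (\<rho> 0)" using per ri' by simp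
  qed
qed

end

context cset begin

lemma T_md: "md n (T e) = T e" by (cases e) (simp_all add: md_md)

definition P :: "nat \<Rightarrow> int" where "P t = T (es ! 0) + (\<Sum>u<t. lenF k (es ! u))"

lemma P_Suc: "P (Suc t) = P t + lenF k (es ! t)" unfolding P_def by simp

lemma P_md: "t < L \<Longrightarrow> md n (P t) = T (es ! t)"
proof (induction t)
  case 0 then show ?case by (simp add: P_def T_md)
next
  case (Suc t)
  then have t: "t < L" by simp
  have "md n (P (Suc t)) = md n (md n (P t) + lenF k (es ! t))" unfolding P_Suc by (simp add: md_md_add)
  also have "\<dots> = H (es ! t)" using Suc t by (simp add: H_T_len)
  also have "\<dots> = T (es ! Suc t)" using cyc[OF t] Suc.prems by simp
  finally show ?case .
qed

lemma P_L: "P L = P 0 + sum_list (map (lenF k) es)"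
  unfolding P_def by (simp add: sum_list_sum_nth atLeast0LessThan)

definition R :: "nat \<Rightarrow> nat" where "R t = card {u. u < t \<and> isRow (es ! u)}"

lemma R_Suc: "R (Suc t) = R t + (if isRow (es ! t) then 1 else 0)"
proof -
  have "{u. u < Suc t \<and> isRow (es ! u)} = {u. u < t \<and> isRow (es ! u)} \<union> (if isRow (es ! t) then {t} else {})"
    by (auto simp: less_Suc_eq)
  then show ?thesis unfolding R_def by (auto simp: card_insert_if)
qed

lemma R_0: "R 0 = 0" unfolding R_def by simp

lemma R_L: "R L = card {i. RowArc i \<in> set es}"
proof -
  have "bij_betw (nth es) {u. u < L \<and> isRow (es ! u)} {e \<in> set es. isRow e}"
  proof (rule bij_betw_imageI)
    show "inj_on (nth es) {u. u < L \<and> isRow (es ! u)}" using dist by (auto simp: inj_on_def nth_eq_iff_index_eq)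
    show "nth es ` {u. u < L \<and> isRow (es ! u)} = {e \<in> set es. isRow e}" by (auto simp: in_set_conv_nth)
  qed
  then have "R L = card {e \<in> set es. isRow e}" unfolding R_def by (rule bij_betw_same_card)
  also have "{e \<in> set es. isRow e} = RowArc ` {i. RowArc i \<in> set es}" unfolding isRow_def by auto
  also have "card \<dots> = card {i. RowArc i \<in> set es}" by (rule card_image) (simp add: inj_on_def)
  finally show ?thesis .
qed

lemma NN_P:
  assumes J0: "\<forall>i. RowArc i \<in> set es \<longrightarrow> J i = J0" and t: "t \<le> L"
  shows "NN n E (P t) = NN n E (P 0) + J0 * int (R t)"
  using t
proof (induction t)
  case 0 then show ?case by (simp add: R_0)
next
  case (Suc t)
  then have t: "t < L" by simp
  have n: "n > 0" by (rule n_pos)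
  have ein: "es ! t \<in> set es" using t by simp
  have pm: "md n (P t) = T (es ! t)" using P_md[OF t] .
  have "NN n E (P (Suc t)) = NN n E (P t) + (if isRow (es ! t) then J0 else 0)"
  proof (cases "es ! t")
    case (RowArc i)
    then have "md n (P t) = md n (l i - 1)" using pm by simp
    from J_lift[OF this] show ?thesis using RowArc J0 ein unfolding P_Suc isRow_def by simp
  next
    case (FwdArc j)
    have j: "j \<in> {1..int n}" using ein FwdArc fwd_in by simp
    have "md n (P t + 1) = md n (md n (P t) + 1)" by (simp add: md_md_add)
    also have "\<dots> = j" using pm FwdArc md_id[OF j] by (simp add: md_md_add)
    finally have "md n (P t + 1) \<notin> E" using ein FwdArc Cc_iff E_iff by simp
    then show ?thesis using NN_step[OF n E_sub, of "P t"] FwdArc unfolding P_Suc isRow_def by simp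
  next
    case (RevArc j)
    have j: "j \<in> {1..int n}" using ein RevArc rev_in by simp
    have "md n (P t) = j" using pm RevArc T_rev[OF j] by simp
    then have "md n (P t - 1 + 1) \<notin> E" using ein RevArc Cr_iff E_iff by simp
    then have "NN n E (P t - 1 + 1) = NN n E (P t - 1)" using NN_step[OF n E_sub, of "P t - 1"] by simp
    then show ?thesis using RevArc unfolding P_Suc isRow_def by simp
  qed
  then show ?case using Suc R_Suc[of t] by (simp add: algebra_simps)
qed

lemma R_hit:
  assumes "c < R L"
  shows "\<exists>u<L. isRow (es ! u) \<and> R u = c"
proof -
  have ex: "\<exists>u. c < R u" using assms by blast
  define u' where "u' = (LEAST u. c < R u)"
  have cu: "c < R u'" unfolding u'_def by (rule LeastI_ex[OF ex])
  have u'L: "u' \<le> L" unfolding u'_def using assms by (rule Least_le)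
  have "u' \<noteq> 0" using cu R_0 by (metis not_less0)
  then obtain u where u: "u' = Suc u" by (cases u') auto
  have "\<not> c < R u" using u unfolding u'_def by (metis lessI not_less_Least)
  then show ?thesis using cu u u'L R_Suc[of u] by (intro exI[of _ u]) (auto split: if_splits)
qed

end

context cset begin

lemma no_rows:
  assumes nr: "\<not> (\<exists>t<L. isRow (es ! t))" and wind: "p * int n = sum_list (map (lenF k) es)"
  shows "card {i. RowArc i \<in> set es} = card E \<and> (\<forall>i. RowArc i \<notin> set es) \<and> gcd (int (card E)) p = 1"
proof -
  have n: "n > 0" by (rule n_pos)
  have norow: "\<not> isRow e" if "e \<in> set es" for e using nr that by (metis in_set_conv_nth)
  have rows: "\<forall>i. RowArc i \<notin> set es" using norow unfolding isRow_def by blast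
  have Ee: "E = {}"
  proof (rule ccontr)
    assume "E \<noteq> {}"
    then obtain \<beta> where bE: "\<beta> \<in> E" by blast
    have b1n: "\<beta> \<in> {1..int n}" using bE E_sub by auto
    have "\<beta> \<in> nodes n l k es" using bE unfolding E_iff by simp
    then obtain e1 where e1: "e1 \<in> set es" "T e1 = \<beta>" unfolding nodes_eq by blast
    obtain e2 where e2: "e2 \<in> set es" "H e2 = \<beta>" using \<open>\<beta> \<in> nodes n l k es\<close> unfolding H_nodes[symmetric] by blast
    have c1: "md n (\<beta> + 1) \<in> Cc"
    proof (cases e1)
      case (RowArc i) then show ?thesis using norow[OF e1(1)] unfolding isRow_def by blast
    next
      case (RevArc j) then show ?thesis using e1 rev_in T_rev Cr_iff bE unfolding E_iff by auto
    next
      case (FwdArc j)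
      have j: "j \<in> {1..int n}" using e1 FwdArc fwd_in by simp
      have "j = md n (md n (j - 1) + 1)" using md_id[OF j] by (simp add: md_md_add)
      then have "j = md n (\<beta> + 1)" using e1 FwdArc by simp
      then show ?thesis using e1 FwdArc Cc_iff by simp
    qed
    have c2: "md n (\<beta> + 1) \<in> Cr"
    proof (cases e2)
      case (RowArc i) then show ?thesis using norow[OF e2(1)] unfolding isRow_def by blast
    next
      case (FwdArc j) then show ?thesis using e2 fwd_in H_fwd Cc_iff bE unfolding E_iff by auto
    next
      case (RevArc j)
      have j: "j \<in> {1..int n}" using e2 RevArc rev_in by simp
      have "j = md n (md n (j - 1) + 1)" using md_id[OF j] by (simp add: md_md_add)
      then have "j = md n (\<beta> + 1)" using e2 RevArc by simp
      then show ?thesis using e2 RevArc Cr_iff by simp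
    qed
    show False using c1 c2 nondeg by auto
  qed
  have same: "t < L \<Longrightarrow> lenF k (es ! t) = lenF k (es ! 0)" for t
  proof (induction t)
    case 0 then show ?case by simp
  next
    case (Suc t)
    then have t: "t < L" by simp
    have ein: "es ! t \<in> set es" "es ! Suc t \<in> set es" using Suc.prems t by simp_all
    have hc: "H (es ! t) = T (es ! Suc t)" using cyc[OF t] Suc.prems by simp
    have "lenF k (es ! Suc t) = lenF k (es ! t)"
    proof (cases "es ! t")
      case (RowArc i) then show ?thesis using norow ein unfolding isRow_def by auto
    next
      case (FwdArc j)
      have j: "j \<in> {1..int n}" using ein FwdArc fwd_in by simp
      show ?thesis
      proof (cases "es ! Suc t")
        case (RowArc i) then show ?thesis using norow ein unfolding isRow_def by auto
      next
        case (FwdArc j') then show ?thesis using \<open>es ! t = FwdArc j\<close> by simp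
      next
        case (RevArc j')
        have j': "j' \<in> {1..int n}" using ein RevArc rev_in by simp
        have "j' = j" using hc FwdArc RevArc H_fwd[OF j] T_rev[OF j'] by simp
        then show ?thesis using ein FwdArc RevArc Cc_iff Cr_iff nondeg by auto
      qed
    next
      case (RevArc j)
      have j: "j \<in> {1..int n}" using ein RevArc rev_in by simp
      show ?thesis
      proof (cases "es ! Suc t")
        case (RowArc i) then show ?thesis using norow ein unfolding isRow_def by auto
      next
        case (RevArc j') then show ?thesis using \<open>es ! t = RevArc j\<close> by simp
      next
        case (FwdArc j')
        have j': "j' \<in> {1..int n}" using ein FwdArc fwd_in by simp
        have eq: "md n (j' - 1) = md n (j - 1)" using hc FwdArc RevArc by simp
        have "j' = md n (md n (j' - 1) + 1)" using md_id[OF j'] by (simp add: md_md_add)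
        also have "\<dots> = md n (md n (j - 1) + 1)" using eq by simp
        also have "\<dots> = j" using md_id[OF j] by (simp add: md_md_add)
        finally show ?thesis using ein FwdArc RevArc Cc_iff Cr_iff nondeg by auto
      qed
    qed
    then show ?case using Suc t by simp
  qed
  have e0: "es ! 0 \<in> set es" using L_pos by simp
  have l0: "lenF k (es ! 0) = 1 \<or> lenF k (es ! 0) = -1"
    using norow[OF e0] unfolding isRow_def by (cases "es ! 0") auto
  have "sum_list (map (lenF k) es) = (\<Sum>t = 0..<L. lenF k (es ! 0))"
    unfolding sum_list_sum_nth using same by simp
  then have sum: "sum_list (map (lenF k) es) = int L * lenF k (es ! 0)" by simp
  have "T e \<in> {1..int n}" for e using md_range[OF n, of "T e"] T_md[of e] by simp
  then have "set (map T es) \<subseteq> {1..int n}" by auto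
  then have "card (set (map T es)) \<le> card {1..int n}" by (intro card_mono) auto
  then have Ln: "L \<le> n" using distinct_card[OF distT] by simp
  have "\<bar>p * int n\<bar> = int L" using wind sum l0 by auto
  then have a: "\<bar>p\<bar> * int n = int L" by (simp add: abs_mult)
  have p1: "\<bar>p\<bar> \<ge> 1"
  proof (rule ccontr)
    assume "\<not> \<bar>p\<bar> \<ge> 1"
    then have "\<bar>p\<bar> = 0" by simp
    then show False using a L_pos by simp
  qed
  have p2: "\<bar>p\<bar> \<le> 1"
  proof (rule ccontr)
    assume "\<not> \<bar>p\<bar> \<le> 1"
    then have "2 * int n \<le> \<bar>p\<bar> * int n" by (intro mult_right_mono) auto
    then show False using a Ln n by simp
  qed
  have "\<bar>p\<bar> = 1" using p1 p2 by simp
  then show ?thesis using Ee rows by simp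
qed

end

context cset begin

lemma rows_case:
  assumes ex: "\<exists>t<L. isRow (es ! t)" and wind: "p * int n = sum_list (map (lenF k) es)"
  shows "card {i. RowArc i \<in> set es} = card E
    \<and> (\<forall>i. RowArc i \<in> set es \<longrightarrow>
          int (card {b \<in> E. jumps_over n l k i b}) = p
          \<and> (\<exists>j\<in>{1..int (card E)}.
               T (RowArc i) = Bminus n l k es j
             \<and> H (RowArc i) = Bplus n l k es (j + p)))
    \<and> gcd (int (card E)) p = 1"
proof -
  have n: "n > 0" by (rule n_pos)
  obtain t where t: "t < L" "isRow (es ! t)" using ex by blast
  then obtain i0 where i0: "RowArc i0 \<in> set es" unfolding isRow_def by (metis nth_mem)
  have s0: "card E > 0" using row_E[OF i0] E_sub finite_subset card_gt_0_iff by blast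
  have rc: "card {i. RowArc i \<in> set es} = card E" by (rule rows_card[OF ex])
  obtain J0 where J0: "\<forall>i. RowArc i \<in> set es \<longrightarrow> J i = J0" using J_const[OF ex] by blast
  have RL: "R L = card E" using R_L rc by simp
  have "NN n E (P L) = NN n E (P 0) + J0 * int (card E)" using NN_P[OF J0, of L] RL by simp
  moreover have "NN n E (P L) = NN n E (P 0) + p * int (card E)"
    using P_L wind NN_add_mult[OF n, of E "P 0" p] by simp
  ultimately have "J0 * int (card E) = p * int (card E)" by linarith
  then have J0p: "J0 = p" using s0 by simp
  have part2: "int (card {b \<in> E. jumps_over n l k i b}) = p
          \<and> (\<exists>j\<in>{1..int (card E)}. T (RowArc i) = Bminus n l k es j \<and> H (RowArc i) = Bplus n l k es (j + p))"
    if ri: "RowArc i \<in> set es" for i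
  proof
    have Ji: "J i = p" using J0 J0p ri by simp
    have k2: "2 \<le> k i" "k i \<le> int n - 1" using row_in[OF ri] by auto
    have kk: "int (nat (k i)) = k i" using k2 by simp
    have "{b \<in> E. jumps_over n l k i b} = {e \<in> E. e \<in> md n ` {(l i - 1) + 1 .. (l i - 1) + int (nat (k i))}}"
      unfolding jumps_over_def cols_lift[OF ri refl] kk by simp
    moreover have "int (card {e \<in> E. e \<in> md n ` {(l i - 1) + 1 .. (l i - 1) + int (nat (k i))}})
        = NN n E ((l i - 1) + int (nat (k i))) - NN n E (l i - 1)"
      using k2 by (intro NN_count_nat[OF n E_sub]) simp
    ultimately show "int (card {b \<in> E. jumps_over n l k i b}) = p"
      using Ji unfolding J_def kk by (simp add: algebra_simps)
    have Gr: "G i \<in> {1..int (card E)}" unfolding G_def using md_range[OF s0] by simp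
    have m1: "Bminus n l k es (G i) = Bminus n l k es (NN n E (l i - 1))"
      unfolding G_def by (rule B_periodic) (simp add: md_md)
    have t1: "Bminus n l k es (NN n E (l i - 1)) = T (RowArc i)" using tail_lem[OF ri, of "l i - 1"] by simp
    have NNh: "NN n E (l i + k i - 1) = NN n E (l i - 1) + p" using Ji unfolding J_def by simp
    have m2: "Bplus n l k es (G i + p) = Bplus n l k es (NN n E (l i + k i - 1))"
      unfolding G_def NNh by (rule B_periodic) (simp add: md_md_add)
    have h1: "Bplus n l k es (NN n E (l i + k i - 1)) = H (RowArc i)" using head_lem[OF ri, of "l i + k i - 1"] by simp
    show "\<exists>j\<in>{1..int (card E)}. T (RowArc i) = Bminus n l k es j \<and> H (RowArc i) = Bplus n l k es (j + p)"
      using Gr m1 t1 m2 h1 by (intro bexI[of _ "G i"]) auto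
  qed
  have gcd1: "gcd (int (card E)) p = 1"
  proof (rule ccontr)
    let ?s = "int (card E)"
    define d where "d = gcd ?s p"
    assume "gcd ?s p \<noteq> 1"
    then have dn1: "d \<noteq> 1" unfolding d_def .
    have "d \<ge> 0" unfolding d_def by simp
    moreover have "d \<noteq> 0" unfolding d_def using s0 by simp
    ultimately have d2: "d \<ge> 2" using dn1 by linarith
    have ds: "d dvd ?s" "d dvd p" unfolding d_def by simp_all
    then obtain c where c: "?s = d * c" by (auto simp: dvd_def)
    obtain p' where p': "p = d * p'" using ds by (auto simp: dvd_def)
    have "0 < d * c" using c s0 by simp
    then have c1: "c \<ge> 1" using d2 by (simp add: zero_less_mult_iff)
    have "c * 1 < c * d" using c1 d2 by (intro mult_strict_left_mono) auto
    then have cs: "c < ?s" using c by (simp add: mult.commute)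
    have pc: "p * c = p' * ?s" using c p' by (simp add: algebra_simps)
    have "nat c < R L" using cs RL c1 by (simp add: nat_less_iff)
    from R_hit[OF this] obtain uc where uc: "uc < L" "isRow (es ! uc)" "R uc = nat c" by blast
    have "0 < R L" using s0 RL by simp
    from R_hit[OF this] obtain u0 where u0: "u0 < L" "isRow (es ! u0)" "R u0 = 0" by blast
    have Nc: "NN n E (P uc) = NN n E (P 0) + p * c" using NN_P[OF J0, of uc] uc J0p c1 by simp
    have N0: "NN n E (P u0) = NN n E (P 0)" using NN_P[OF J0, of u0] u0 by simp
    have "NN n E (P uc) = NN n E (P u0) + p' * ?s" using Nc N0 pc by simp
    then have "md (card E) (NN n E (P uc)) = md (card E) (NN n E (P u0))" by (simp add: md_add_mult)
    then have Beq: "Bminus n l k es (NN n E (P uc)) = Bminus n l k es (NN n E (P u0))" by (rule B_periodic)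
    have tl: "Bminus n l k es (NN n E (P u)) = T (es ! u)" if uu: "u < L" "isRow (es ! u)" for u
    proof -
      obtain i where i: "es ! u = RowArc i" using uu(2) unfolding isRow_def by blast
      have ri: "RowArc i \<in> set es" using i uu by (metis nth_mem)
      show ?thesis using tail_lem[OF ri, of "P u"] P_md[OF uu(1)] i by simp
    qed
    have "T (es ! uc) = T (es ! u0)" using tl[OF uc(1,2)] tl[OF u0(1,2)] Beq by simp
    then have "map T es ! uc = map T es ! u0" using uc u0 by simp
    then have "uc = u0" using distT uc u0 nth_eq_iff_index_eq[of "map T es" uc u0] by simp
    then show False using uc u0 c1 by simp
  qed
  show ?thesis using rc part2 gcd1 by blast
qed

end

theorem lemma7p2:
  fixes m n :: nat and A :: "nat \<Rightarrow> int \<Rightarrow> nat"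
    and l k :: "nat \<Rightarrow> int" and es :: "arc list" and p :: int
  assumes circ: "circular_wit m n A l k"
    and nodom: "no_dominating_rows m n A"
    and circuit: "is_circuit m n l k es"
    and nondeg: "circs es \<inter> crosses es = {}"
    and wind: "p * int n = (\<Sum>e\<leftarrow>es. lenF k e)"
  shows "card {i. RowArc i \<in> set es} = card (ess_bullets n l k es)
    \<and> (\<forall>i. RowArc i \<in> set es \<longrightarrow>
          int (card {b \<in> ess_bullets n l k es. jumps_over n l k i b}) = p
          \<and> (\<exists>j\<in>{1..int (card (ess_bullets n l k es))}.
               tailF n l k (RowArc i) = Bminus n l k es j
             \<and> headF n l k (RowArc i) = Bplus n l k es (j + p)))
    \<and> gcd (int (card (ess_bullets n l k es))) p = 1"
proof -
  interpret cset m n A l k es using circ nodom circuit nondeg by unfold_locales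
  have w: "p * int n = sum_list (map (lenF k) es)" using wind by simp
  show ?thesis
  proof (cases "\<exists>t<length es. isRow (es ! t)")
    case True
    from rows_case[OF True w] show ?thesis by simp
  next
    case False
    have h: "card {i. RowArc i \<in> set es} = card E" "\<forall>i. RowArc i \<notin> set es" "gcd (int (card E)) p = 1"
      using no_rows[OF False w] by auto
    have "{i. RowArc i \<in> set es} = {}" using h(2) by auto
    then have "card E = 0" using h(1) by simp
    then show ?thesis using h by simp
  qed
qed


end
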